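(* Let $n_1\geq n_2\geq 2$ be integers and let $E$ be the edge set of $\textsc{Grid}(n_1,n_2)$. Define $g:E\to[2n_1n_2-n_1-n_2]$ by $$g(\{(i,j),(i,j+1)\})=(i-1)(2n_2-1)+j\quad\text{for }(i,j)\in[n_1]\times[n_2-1],$$ $$g(\{(i,j),(i+1,j)\})=(n_1-i)(2n_2-1)+1-j\quad\text{for }(i,j)\in[n_1-1]\times[n_2].$$ Then $g$ is a $Q_2$-magic edge labeling of $\textsc{Grid}(n_1,n_2)$ with $Q_2$-magic sum $(2n_1-1)(2n_2-1)+1$.
   Context: $[k]=\{1,\ldots,k\}$. $\textsc{Grid}(n_1,n_2)$ is the graph with vertex set $[n_1]\times[n_2]$ in which $(i,j)$ and $(i',j')$ are adjacent iff $|i-i'|+|j-j'|=1$; it has $2n_1n_2-n_1-n_2$ edges. $Q_2$ is the 4-cycle $\textsc{Grid}(2,2)$. A bijection $g:E\to\{1,\ldots,|E|\}$ on the edge set of a graph $G=(V,E)$ is an $H$-magic edge labeling if there is a constant $c'$ (the $H$-magic sum) with $\sum_{e\in E(H')}g(e)=c'$ for every subgraph $H'\subseteq G$ isomorphic to $H$. *)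

theory Defs
  imports Main
begin

text \<open>Simple graphs: a vertex set together with a set of edges, each edge a 2-element set.\<close>
type_synonym 'a graph = "'a set \<times> 'a set set"

definition grid_V :: "nat \<Rightarrow> nat \<Rightarrow> (nat \<times> nat) set" where
  "grid_V n1 n2 = {1..n1} \<times> {1..n2}"

definition grid_E :: "nat \<Rightarrow> nat \<Rightarrow> (nat \<times> nat) set set" where
  "grid_E n1 n2 = {{u, v} | u v. u \<in> grid_V n1 n2 \<and> v \<in> grid_V n1 n2 \<and>
      \<bar>int (fst u) - int (fst v)\<bar> + \<bar>int (snd u) - int (snd v)\<bar> = 1}"

definition Grid :: "nat \<Rightarrow> nat \<Rightarrow> (nat \<times> nat) graph" where
  "Grid n1 n2 = (grid_V n1 n2, grid_E n1 n2)"

definition Q2 :: "(nat \<times> nat) graph" where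
  "Q2 = Grid 2 2"

definition is_subgraph :: "'a graph \<Rightarrow> 'a graph \<Rightarrow> bool" where
  "is_subgraph H G \<longleftrightarrow> fst H \<subseteq> fst G \<and> snd H \<subseteq> snd G \<and> (\<forall>e\<in>snd H. e \<subseteq> fst H)"

definition graph_iso :: "'a graph \<Rightarrow> 'b graph \<Rightarrow> bool" where
  "graph_iso H G \<longleftrightarrow> (\<exists>f. bij_betw f (fst H) (fst G) \<and>
      (\<forall>x\<in>fst H. \<forall>y\<in>fst H. {x, y} \<in> snd H \<longleftrightarrow> {f x, f y} \<in> snd G))"

definition magic_edge_labeling :: "'b graph \<Rightarrow> 'a graph \<Rightarrow> ('a set \<Rightarrow> nat) \<Rightarrow> nat \<Rightarrow> bool" where
  "magic_edge_labeling H G g c \<longleftrightarrow>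
     bij_betw g (snd G) {1..card (snd G)} \<and>
     (\<forall>H'. is_subgraph H' G \<and> graph_iso H H' \<longrightarrow> (\<Sum>e\<in>snd H'. g e) = c)"

end

theory Submission
  imports Defs
begin

definition adj :: "nat\<times>nat \<Rightarrow> nat\<times>nat \<Rightarrow> bool" where
 "adj u v \<longleftrightarrow> \<bar>int (fst u) - int (fst v)\<bar> + \<bar>int (snd u) - int (snd v)\<bar> = 1"

lemma adj_cases: "adj (a1,a2) (b1,b2) \<longleftrightarrow> (b1 = a1 + 1 \<and> b2 = a2) \<or> (a1 = b1 + 1 \<and> a2 = b2) \<or> (b2 = a2 + 1 \<and> a1 = b1) \<or> (a2 = b2 + 1 \<and> a1 = b1)"
  unfolding adj_def by auto

lemma adj_sym: "adj u v \<Longrightarrow> adj v u" unfolding adj_def by auto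

lemma CN:
  assumes "adj (a1,a2) (x1,x2)" "adj (x1,x2) (c1,c2)" "(a1,a2) \<noteq> (c1,c2)"
  shows "((a1 = c1+1 \<or> c1 = a1+1) \<and> (a2 = c2+1 \<or> c2 = a2+1) \<and> ((x1,x2) = (a1,c2) \<or> (x1,x2) = (c1,a2)))
       \<or> (a1 = c1 \<and> x1 = a1 \<and> 2*x2 = a2+c2) \<or> (a2 = c2 \<and> x2 = a2 \<and> 2*x1 = a1+c1)"
  using assms unfolding adj_cases by (elim disjE conjE; clarsimp)

lemma geo:
  fixes a1 a2 b1 b2 c1 c2 d1 d2 :: nat
  assumes "adj (a1,a2) (b1,b2)" "adj (b1,b2) (c1,c2)" "adj (c1,c2) (d1,d2)" "adj (d1,d2) (a1,a2)"
   "(a1,a2) \<noteq> (c1,c2)" "(b1,b2) \<noteq> (d1,d2)"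
  defines "i \<equiv> min a1 c1" and "j \<equiv> min a2 c2"
  shows "((a1,a2),(b1,b2),(c1,c2),(d1,d2)) \<in> {
     ((i,j),(i,j+1),(i+1,j+1),(i+1,j)), ((i,j+1),(i+1,j+1),(i+1,j),(i,j)),
     ((i+1,j+1),(i+1,j),(i,j),(i,j+1)), ((i+1,j),(i,j),(i,j+1),(i+1,j+1)),
     ((i,j),(i+1,j),(i+1,j+1),(i,j+1)), ((i+1,j),(i+1,j+1),(i,j+1),(i,j)),
     ((i+1,j+1),(i,j+1),(i,j),(i+1,j)), ((i,j+1),(i,j),(i+1,j),(i+1,j+1))}"
proof -
  note B = CN[OF assms(1,2,5)]
  note D = CN[OF adj_sym[OF assms(4)] adj_sym[OF assms(3)] assms(5)]
  have diag: "a1 \<noteq> c1 \<and> a2 \<noteq> c2"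
  proof (rule ccontr)
    assume "\<not> (a1 \<noteq> c1 \<and> a2 \<noteq> c2)"
    then have "b1 = d1 \<and> b2 = d2" using B D by auto
    then show False using assms(6) by simp
  qed
  have sx: "a1 = c1+1 \<or> c1 = a1+1" and sy: "a2 = c2+1 \<or> c2 = a2+1" and
    bd: "(b1 = a1 \<and> b2 = c2 \<and> d1 = c1 \<and> d2 = a2) \<or> (b1 = c1 \<and> b2 = a2 \<and> d1 = a1 \<and> d2 = c2)"
    using B D diag assms(6) by auto
  show ?thesis using sx sy bd unfolding i_def j_def
    by (elim disjE conjE; hypsubst_thin; simp)
qed

definition F :: "nat \<Rightarrow> nat \<Rightarrow> nat\<times>nat \<Rightarrow> nat\<times>nat \<Rightarrow> nat" where
 "F n1 n2 u v = (if fst u = fst v then (fst u - 1)*(2*n2-1) + min (snd u) (snd v)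
    else (n1 - min (fst u) (fst v))*(2*n2-1) + 1 - min (snd u) (snd v))"

lemma F_comm: "F n1 n2 u v = F n1 n2 v u"
  unfolding F_def by (simp add: min.commute eq_commute)

lemma grid_E_iff: "{p,q} \<in> grid_E n m \<longleftrightarrow> p \<in> grid_V n m \<and> q \<in> grid_V n m \<and> adj p q"
proof
  assume "{p,q} \<in> grid_E n m"
  then obtain u v where "{p,q} = {u,v}" "u \<in> grid_V n m" "v \<in> grid_V n m" "adj u v"
    unfolding grid_E_def adj_def by blast
  then show "p \<in> grid_V n m \<and> q \<in> grid_V n m \<and> adj p q"
    by (auto simp: doubleton_eq_iff adj_def)
next
  assume "p \<in> grid_V n m \<and> q \<in> grid_V n m \<and> adj p q"
  then show "{p,q} \<in> grid_E n m" unfolding grid_E_def adj_def by blast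
qed

lemma grid_E_elem: "e \<in> grid_E n m \<Longrightarrow> \<exists>p q. e = {p,q} \<and> p \<in> grid_V n m \<and> q \<in> grid_V n m \<and> adj p q"
  unfolding grid_E_def adj_def by blast

lemma sq:
  assumes "i \<ge> 1" "i+1 \<le> n1" "j \<ge> 1" "j+1 \<le> n2"
  shows "F n1 n2 (i,j) (i,j+1) + F n1 n2 (i,j+1) (i+1,j+1) + F n1 n2 (i+1,j+1) (i+1,j) + F n1 n2 (i+1,j) (i,j)
     = (2 * n1 - 1) * (2 * n2 - 1) + 1"
proof -
  obtain i' where i: "i = Suc i'" using \<open>i\<ge>1\<close> by (cases i) auto
  obtain k where n1: "n1 = i + 1 + k" using \<open>i+1\<le>n1\<close> le_Suc_ex by blast
  obtain l where n2: "n2 = j + 1 + l" using \<open>j+1\<le>n2\<close> le_Suc_ex by blast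
  show ?thesis unfolding F_def using i n1 n2 by (simp add: algebra_simps)
qed

lemma cyc:
  fixes a b c d :: "nat \<times> nat"
  assumes "adj a b" "adj b c" "adj c d" "adj d a" "a \<noteq> c" "b \<noteq> d"
   "a \<in> grid_V n1 n2" "c \<in> grid_V n1 n2"
  shows "F n1 n2 a b + F n1 n2 b c + F n1 n2 c d + F n1 n2 d a = (2 * n1 - 1) * (2 * n2 - 1) + 1"
proof -
  obtain a1 a2 where a: "a = (a1,a2)" by (cases a)
  obtain b1 b2 where b: "b = (b1,b2)" by (cases b)
  obtain c1 c2 where c: "c = (c1,c2)" by (cases c)
  obtain d1 d2 where d: "d = (d1,d2)" by (cases d)
  define i where "i = min a1 c1"
  define j where "j = min a2 c2"
  note G = geo[OF assms(1-6)[unfolded a b c d], folded i_def j_def]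
  have "a1 \<noteq> c1 \<and> a2 \<noteq> c2" using G by auto
  have bnd: "i \<ge> 1" "i+1 \<le> n1" "j \<ge> 1" "j+1 \<le> n2"
    using G assms(7,8) unfolding a c grid_V_def i_def j_def by auto
  note S = sq[OF bnd]
  show ?thesis using G S unfolding a b c d
    by (elim insertE; simp add: F_comm add_ac)
qed

lemma adj_split:
  assumes "adj u v"
  obtains i j where "u = (i,j)" "v = (i,j+1)" | i j where "v = (i,j)" "u = (i,j+1)"
    | i j where "u = (i,j)" "v = (i+1,j)" | i j where "v = (i,j)" "u = (i+1,j)"
proof -
  obtain u1 u2 v1 v2 where u: "u = (u1,u2)" and v: "v = (v1,v2)" by (cases u, cases v)
  show ?thesis using assms that unfolding u v adj_cases by auto
qed

theorem lemma4:
  fixes n1 n2 :: nat and g :: "(nat \<times> nat) set \<Rightarrow> nat"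
  assumes "n1 \<ge> n2" and "n2 \<ge> 2"
    and "\<And>i j. i \<in> {1..n1} \<Longrightarrow> j \<in> {1..n2 - 1} \<Longrightarrow>
           g {(i, j), (i, j + 1)} = (i - 1) * (2 * n2 - 1) + j"
    and "\<And>i j. i \<in> {1..n1 - 1} \<Longrightarrow> j \<in> {1..n2} \<Longrightarrow>
           g {(i, j), (i + 1, j)} = (n1 - i) * (2 * n2 - 1) + 1 - j"
  shows "magic_edge_labeling Q2 (Grid n1 n2) g ((2 * n1 - 1) * (2 * n2 - 1) + 1)"
proof -
  have gF: "g {u,v} = F n1 n2 u v" if "adj u v" "u \<in> grid_V n1 n2" "v \<in> grid_V n1 n2" for u v
    using that(1)
  proof (cases rule: adj_split)
    case (1 i j) then show ?thesis using that assms(3)[of i j] by (auto simp: grid_V_def F_def)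
  next
    case (2 i j) then show ?thesis using that assms(3)[of i j] by (auto simp: grid_V_def F_def insert_commute)
  next
    case (3 i j) then show ?thesis using that assms(4)[of i j] by (auto simp: grid_V_def F_def)
  next
    case (4 i j) then show ?thesis using that assms(4)[of i j] by (auto simp: grid_V_def F_def insert_commute)
  qed
  define E where "E = grid_E n1 n2"
  define B where "B = 2*n2 - 1"
  define N where "N = n1*(n2-1) + (n1-1)*n2"
  define HE where "HE = (\<lambda>(i,j). {(i,j),(i,j+1)}) ` ({1..n1}\<times>{1..n2-1})"
  define VE where "VE = (\<lambda>(i,j). {(i,j),(i+1,j)}) ` ({1..n1-1}\<times>{1..n2})"
  have n1pos: "n1 \<ge> 2" using assms(1,2) by simp
  have NB: "N = (n1-1)*B + (n2-1)"
  proof -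
    obtain m where m: "n1 = m+1" using n1pos by (metis add.commute le_add_diff_inverse2 le_trans one_le_numeral)
    obtain p where p: "n2 = p+2" using assms(2) by (metis add.commute le_add_diff_inverse)
    show ?thesis unfolding N_def B_def m p by (simp add: algebra_simps)
  qed
  have Bge: "B \<ge> n2" "n2 - 1 < B" unfolding B_def using assms(2) by auto
  have E_sub: "E \<subseteq> HE \<union> VE"
  proof
    fix e assume "e \<in> E"
    then obtain u v where e: "e = {u,v}" and uv: "u \<in> grid_V n1 n2" "v \<in> grid_V n1 n2" "adj u v"
      unfolding E_def using grid_E_elem by blast
    from uv(3) show "e \<in> HE \<union> VE"
    proof (cases rule: adj_split)
      case (1 i j) then show ?thesis using uv unfolding e HE_def grid_V_def by (auto intro!: image_eqI[of _ _ "(i,j)"])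
    next
      case (2 i j) then show ?thesis using uv unfolding e HE_def grid_V_def by (auto intro!: image_eqI[of _ _ "(i,j)"])
    next
      case (3 i j) then show ?thesis using uv unfolding e VE_def grid_V_def by (auto intro!: image_eqI[of _ _ "(i,j)"])
    next
      case (4 i j) then show ?thesis using uv unfolding e VE_def grid_V_def by (auto intro!: image_eqI[of _ _ "(i,j)"])
    qed
  qed
  have HE_sub: "HE \<subseteq> E" unfolding HE_def E_def
    by (auto simp: grid_E_iff grid_V_def adj_def)
  have VE_sub: "VE \<subseteq> E" unfolding VE_def E_def
    by (auto simp: grid_E_iff grid_V_def adj_def)
  have finE: "finite E" using E_sub unfolding HE_def VE_def by (rule finite_subset) auto
  have cardE: "card E \<le> N"
  proof -
    have "card E \<le> card (HE \<union> VE)" using E_sub by (intro card_mono) (auto simp: HE_def VE_def)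
    also have "\<dots> \<le> card HE + card VE" by (rule card_Un_le)
    also have "card HE \<le> n1*(n2-1)" unfolding HE_def
      using card_image_le[of "{1..n1}\<times>{1..n2-1}" "\<lambda>(i,j). {(i,j),(i,j+1)}"] by (simp add: card_cartesian_product)
    also have "card VE \<le> (n1-1)*n2" unfolding VE_def
      using card_image_le[of "{1..n1-1}\<times>{1..n2}" "\<lambda>(i,j). {(i,j),(i+1,j)}"] by (simp add: card_cartesian_product)
    finally show ?thesis unfolding N_def by simp
  qed
  have img_sub: "g ` E \<subseteq> {1..N}"
  proof
    fix k assume "k \<in> g ` E"
    then obtain e where "e \<in> E" "k = g e" by auto
    then have "e \<in> HE \<or> e \<in> VE" using E_sub by auto
    then show "k \<in> {1..N}"
    proof
      assume "e \<in> HE"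
      then obtain i j where ij: "i \<in> {1..n1}" "j \<in> {1..n2-1}" "e = {(i,j),(i,j+1)}" unfolding HE_def by auto
      have "(i-1)*B \<le> (n1-1)*B" using ij by (intro mult_le_mono1) auto
      moreover have "g e = (i-1)*B + j" using ij assms(3)[of i j] unfolding B_def by auto
      ultimately show ?thesis using ij \<open>k = g e\<close> NB unfolding atLeastAtMost_iff by linarith
    next
      assume "e \<in> VE"
      then obtain i j where ij: "i \<in> {1..n1-1}" "j \<in> {1..n2}" "e = {(i,j),(i+1,j)}" unfolding VE_def by auto
      have "(n1-i)*B \<le> (n1-1)*B" using ij by (intro mult_le_mono1) auto
      moreover have "1*B \<le> (n1-i)*B" using ij by (intro mult_le_mono1) auto
      moreover have "g e = (n1-i)*B + 1 - j" using ij assms(4)[of i j] unfolding B_def by auto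
      ultimately show ?thesis using ij \<open>k = g e\<close> NB Bge unfolding atLeastAtMost_iff by linarith
    qed
  qed
  have sup: "{1..N} \<subseteq> g ` E"
  proof
    fix k assume k: "k \<in> {1..N}"
    define q where "q = (k-1) div B"
    define r where "r = (k-1) mod B"
    have Bpos: "B > 0" using Bge assms(2) by auto
    have kqr: "k - 1 = q*B + r" unfolding q_def r_def by simp
    have rB: "r < B" unfolding r_def using Bpos by simp
    have "q*B < n1*B"
    proof -
      have "q*B \<le> k - 1" using kqr by simp
      also have "\<dots> < N" using k by auto
      also have "N \<le> (n1-1)*B + B" using NB Bge by simp
      also have "\<dots> = n1*B" using n1pos by (cases n1) auto
      finally show ?thesis .
    qed
    then have qn: "q < n1" by simp
    show "k \<in> g ` E"
    proof (cases "r < n2 - 1")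
      case True
      have "g {(q+1, r+1), (q+1, r+1+1)} = q*B + (r+1)"
        using assms(3)[of "q+1" "r+1"] True qn unfolding B_def by auto
      moreover have "{(q+1, r+1), (q+1, r+1+1)} \<in> HE" unfolding HE_def
        by (rule image_eqI[where x="(q+1,r+1)"]) (use True qn in auto)
      then have "{(q+1, r+1), (q+1, r+1+1)} \<in> E" using HE_sub by blast
      ultimately show ?thesis using kqr k by (metis add.commute add_Suc_right atLeastAtMost_iff image_eqI le_add_diff_inverse2 plus_1_eq_Suc)
    next
      case False
      have "q \<noteq> n1 - 1"
      proof
        assume "q = n1 - 1"
        then have "k - 1 \<ge> N" using kqr NB False by simp
        then show False using k by auto
      qed
      then have q2: "q + 2 \<le> n1" using qn by simp
      define i where "i = n1 - 1 - q"
      define j where "j = B - r"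
      have i: "i \<in> {1..n1-1}" "n1 - i = q + 1" unfolding i_def using q2 by auto
      have j: "j \<in> {1..n2}" unfolding j_def using False rB B_def by auto
      have "g {(i,j),(i+1,j)} = (q+1)*B + 1 - j" using assms(4)[OF i(1) j] i(2) unfolding B_def by simp
      also have "\<dots> = k" using kqr rB k unfolding j_def by (simp add: algebra_simps, linarith)
      finally have "g {(i,j),(i+1,j)} = k" .
      moreover have "{(i,j),(i+1,j)} \<in> VE" unfolding VE_def
        by (rule image_eqI[where x="(i,j)"]) (use i j in auto)
      then have "{(i,j),(i+1,j)} \<in> E" using VE_sub by blast
      ultimately show ?thesis by (metis image_eqI)
    qed
  qed
  have cimg: "card (g ` E) = N"
    using card_mono[OF _ sup] card_mono[OF finite_atLeastAtMost img_sub] finE by simp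
  have injg: "inj_on g E"
    using cimg cardE card_image_le[OF finE, of g] finE by (simp add: inj_on_iff_eq_card)
  have cardE': "card E = N" using cimg cardE card_image_le[OF finE, of g] by simp
  have bij: "bij_betw g E {1..card E}"
    unfolding bij_betw_def using injg img_sub sup cardE' by auto
  have magic: "(\<Sum>e\<in>snd H'. g e) = (2 * n1 - 1) * (2 * n2 - 1) + 1"
    if H': "is_subgraph H' (Grid n1 n2)" "graph_iso Q2 H'" for H'
  proof -
    obtain f where fb: "bij_betw f (grid_V 2 2) (fst H')"
      and fe: "\<And>x y. x \<in> grid_V 2 2 \<Longrightarrow> y \<in> grid_V 2 2 \<Longrightarrow> {x, y} \<in> grid_E 2 2 \<longleftrightarrow> {f x, f y} \<in> snd H'"
      using H'(2) unfolding graph_iso_def Q2_def Grid_def by auto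
    have sub: "fst H' \<subseteq> grid_V n1 n2" "snd H' \<subseteq> grid_E n1 n2" "\<And>e. e \<in> snd H' \<Longrightarrow> e \<subseteq> fst H'"
      using H'(1) unfolding is_subgraph_def Grid_def by auto
    have V2: "grid_V 2 2 = {(1,1),(1,2),(2,1),(2,2)}" unfolding grid_V_def by auto
    have finj: "inj_on f (grid_V 2 2)" using fb bij_betw_imp_inj_on by blast
    have fimg: "f ` grid_V 2 2 = fst H'" using fb bij_betw_imp_surj_on by blast
    define a where "a = f (1,1)"
    define b where "b = f (1,2)"
    define c where "c = f (2,2)"
    define d where "d = f (2,1)"
    have dist: "a \<noteq> b" "a \<noteq> c" "a \<noteq> d" "b \<noteq> c" "b \<noteq> d" "c \<noteq> d"
      unfolding a_def b_def c_def d_def using finj unfolding V2 by (auto dest: inj_onD)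
    have e2: "{(1,1),(1,2)} \<in> grid_E 2 2" "{(1,2),(2,2)} \<in> grid_E 2 2"
        "{(2,2),(2,1)} \<in> grid_E 2 2" "{(2,1),(1,1)} \<in> grid_E 2 2"
      by (auto simp: grid_E_iff grid_V_def adj_def)
    have inH: "{a,b} \<in> snd H'" "{b,c} \<in> snd H'" "{c,d} \<in> snd H'" "{d,a} \<in> snd H'"
      unfolding a_def b_def c_def d_def using e2 fe unfolding V2 by auto
    have adjs: "adj a b" "adj b c" "adj c d" "adj d a" and inV: "a \<in> grid_V n1 n2" "b \<in> grid_V n1 n2"
        "c \<in> grid_V n1 n2" "d \<in> grid_V n1 n2"
      using inH sub(2) by (auto simp: grid_E_iff)
    have SH: "snd H' = {{a,b},{b,c},{c,d},{d,a}}"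
    proof
      show "{{a,b},{b,c},{c,d},{d,a}} \<subseteq> snd H'" using inH by auto
      show "snd H' \<subseteq> {{a,b},{b,c},{c,d},{d,a}}"
      proof
        fix e assume e: "e \<in> snd H'"
        then obtain x y where xy: "e = {x,y}" using sub(2) grid_E_elem by blast
        have "x \<in> fst H'" "y \<in> fst H'" using sub(3)[OF e] xy by auto
        then obtain p q where p: "p \<in> grid_V 2 2" "x = f p" and q: "q \<in> grid_V 2 2" "y = f q"
          using fimg by blast
        have "{p,q} \<in> grid_E 2 2" using fe[OF p(1) q(1)] e xy p q by simp
        then have "adj p q" by (simp add: grid_E_iff)
        then show "e \<in> {{a,b},{b,c},{c,d},{d,a}}"
          using p q xy unfolding V2 a_def b_def c_def d_def
          by (auto simp: adj_def insert_commute)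
      qed
    qed
    have "(\<Sum>e\<in>snd H'. g e) = g {a,b} + g {b,c} + g {c,d} + g {d,a}"
      unfolding SH using dist by (simp add: doubleton_eq_iff)
    also have "\<dots> = F n1 n2 a b + F n1 n2 b c + F n1 n2 c d + F n1 n2 d a"
      using gF adjs inV by simp
    also have "\<dots> = (2 * n1 - 1) * (2 * n2 - 1) + 1"
      by (rule cyc[OF adjs dist(2) dist(5) inV(1) inV(3)])
    finally show ?thesis .
  qed
  show ?thesis unfolding magic_edge_labeling_def using bij magic by (simp add: Grid_def E_def)
qed

end
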